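(* Fix $0<\alpha<2\le\kappa$. Let $X_1$ be the number of potential offspring of a given parent pair in a generation where, with probability $\varepsilon_N\in(0,1)$, $X_1\vartriangleright\mathbb L(\alpha,\zeta(N))$ and otherwise $X_1\vartriangleright\mathbb L(\kappa,\zeta(N))$. Suppose that, as $N\to\infty$, $\varepsilon_N=O(\zeta(N)^{\alpha-1})$ when $0<\alpha<1$, $\varepsilon_N=O(1/\log\zeta(N))$ when $\alpha=1$, and $\varepsilon_N=O(1)$ when $\alpha>1$. Then $\limsup_{N\to\infty}\mathbb E[X_1]<\infty$.
   Context: For $a>0$ and a positive integer-valued deterministic function $\zeta(N)$, $X\vartriangleright\mathbb L(a,\zeta(N))$ means: $\mathbb P(X\le\zeta(N))=1$, the mass outside $\{2,\dots,\zeta(N)\}$ lies on $\{0,1\}$, and for $k\in\{2,\dots,\zeta(N)\}$, $g_a(k)(k^{-a}-(1+k)^{-a})\le\mathbb P(X=k)\le f_a(k)(k^{-a}-(1+k)^{-a})$, where $g_a\le f_a$ are bounded positive functions on $\mathbb N$ with $\inf_k\sup_{i\ge k}f_a(i)<\infty$ and $\sup_k\inf_{i\ge k}g_a(i)>0$, and it is assumed that $\mathbb E[X]>2$. *)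

theory Defs
  imports "HOL-Probability.Probability" "HOL-Library.Landau_Symbols"
begin

definition admissible_env :: "(nat \<Rightarrow> real) \<Rightarrow> (nat \<Rightarrow> real) \<Rightarrow> bool" where
  "admissible_env g f \<longleftrightarrow>
     (\<forall>k. 0 < g k \<and> g k \<le> f k) \<and> bounded (range f) \<and> bounded (range g) \<and>
     (\<exists>B. \<exists>k. \<forall>i\<ge>k. f i \<le> B) \<and>
     (\<exists>c>0. \<exists>k. \<forall>i\<ge>k. c \<le> g i)"

definition in_L :: "real \<Rightarrow> (nat \<Rightarrow> real) \<Rightarrow> (nat \<Rightarrow> real) \<Rightarrow> nat \<Rightarrow> nat pmf \<Rightarrow> bool" where
  "in_L a g f z P \<longleftrightarrow>
     measure_pmf.prob P {..z} = 1 \<and>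
     set_pmf P \<subseteq> {0, 1} \<union> {2..z} \<and>
     (\<forall>k\<in>{2..z}. g k * (real k powr (-a) - (1 + real k) powr (-a)) \<le> pmf P k \<and>
                 pmf P k \<le> f k * (real k powr (-a) - (1 + real k) powr (-a))) \<and>
     measure_pmf.expectation P real > 2"

end

theory Submission
  imports Defs
begin

lemma mvt_powr:
  fixes x y p :: real assumes "0<x" "x<y"
  shows "\<exists>z. x<z \<and> z<y \<and> y powr p - x powr p = (y-x) * (p * z powr (p-1))"
  using assms by (intro MVT2) (auto intro!: derivative_eq_intros)

lemma mvt_ln:
  fixes x y :: real assumes "0<x" "x<y"
  shows "\<exists>z. x<z \<and> z<y \<and> ln y - ln x = (y-x) * (1/z)"
  using assms by (intro MVT2) (auto intro!: derivative_eq_intros)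

lemma diff_bound:
  fixes a k :: real assumes "0<a" "1\<le>k"
  shows "k * (k powr (-a) - (k+1) powr (-a)) \<le> a * k powr (-a)"
proof -
  obtain z where z: "k<z" "z<k+1" "(k+1) powr (-a) - k powr (-a) = (k+1-k) * (-a * z powr (-a-1))"
    using mvt_powr[of k "k+1" "-a"] assms by auto
  have "z powr (-a-1) \<le> k powr (-a-1)" using z assms by (intro powr_mono2') auto
  have "k powr (-a) - (k+1) powr (-a) = a * z powr (-a-1)" using z(3) by simp
  also have "\<dots> \<le> a * k powr (-a-1)" using \<open>z powr (-a-1) \<le> k powr (-a-1)\<close> assms
    by (intro mult_left_mono) auto
  finally have "k powr (-a) - (k+1) powr (-a) \<le> a * k powr (-a-1)" .
  hence "k * (k powr (-a) - (k+1) powr (-a)) \<le> k * (a * k powr (-a-1))"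
    using assms by (intro mult_left_mono) auto
  also have "k * k powr (-a-1) = k powr (-a)" using assms
    by (simp add: powr_add[symmetric] powr_minus_divide powr_diff)
  ultimately show ?thesis by (simp add: algebra_simps)
qed

lemma T_lt1:
  fixes a :: real assumes "0<a" "a<1" "1\<le>n"
  shows "(\<Sum>k=2..n. real k powr (-a)) \<le> real n powr (1-a) / (1-a)"
  using assms(3)
proof (induction n rule: dec_induct)
  case base then show ?case using assms by simp
next
  case (step n)
  obtain z where z: "real n<z" "z<real n+1" "(real n+1) powr (1-a) - real n powr (1-a) = (real n+1-real n) * ((1-a) * z powr (1-a-1))"
    using mvt_powr[of "real n" "real n+1" "1-a"] step by auto
  have "real (Suc n) powr (-a) \<le> z powr (-a)" using z step assms by (intro powr_mono2') auto
  hence "(1-a) * real (Suc n) powr (-a) \<le> real (Suc n) powr (1-a) - real n powr (1-a)"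
    using z assms by (simp add: add.commute)
  hence "real (Suc n) powr (-a) \<le> (real (Suc n) powr (1-a) - real n powr (1-a)) / (1-a)"
    using assms by (simp add: field_simps)
  moreover have "(\<Sum>k=2..Suc n. real k powr (-a)) = (\<Sum>k=2..n. real k powr (-a)) + real (Suc n) powr (-a)"
    using step by (simp add: sum.atLeast_Suc_atMost_Suc_shift)
  ultimately show ?case using step.IH by (simp add: diff_divide_distrib)
qed

lemma T_eq1:
  assumes "1\<le>n"
  shows "(\<Sum>k=2..n. real k powr (-1)) \<le> ln (real n)"
  using assms
proof (induction n rule: dec_induct)
  case base then show ?case by simp
next
  case (step n)
  obtain z where z: "real n<z" "z<real n+1" "ln (real n+1) - ln (real n) = (real n+1-real n) * (1/z)"
    using mvt_ln[of "real n" "real n+1"] step by auto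
  have "1 / real (Suc n) \<le> 1/z" using z step by (intro divide_left_mono) auto
  hence "real (Suc n) powr (-1) \<le> ln (real (Suc n)) - ln (real n)"
    using z by (simp add: powr_minus_divide add.commute)
  moreover have "(\<Sum>k=2..Suc n. real k powr (-1)) = (\<Sum>k=2..n. real k powr (-1)) + real (Suc n) powr (-1)"
    using step by simp
  ultimately show ?case using step.IH by simp
qed

lemma T_gt1:
  fixes a :: real assumes "1<a" "1\<le>n"
  shows "(\<Sum>k=2..n. real k powr (-a)) \<le> (1 - real n powr (1-a)) / (a-1)"
  using assms(2)
proof (induction n rule: dec_induct)
  case base then show ?case using assms by simp
next
  case (step n)
  obtain z where z: "real n<z" "z<real n+1" "(real n+1) powr (1-a) - real n powr (1-a) = (real n+1-real n) * ((1-a) * z powr (1-a-1))"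
    using mvt_powr[of "real n" "real n+1" "1-a"] step by auto
  have "real (Suc n) powr (-a) \<le> z powr (-a)" using z step assms by (intro powr_mono2') auto
  hence "(a-1) * real (Suc n) powr (-a) \<le> (a-1) * z powr (-a)"
    using assms by (intro mult_left_mono) auto
  also have "(a-1) * z powr (-a) = real n powr (1-a) - real (Suc n) powr (1-a)"
    using z(3) by (simp add: algebra_simps add.commute)
  finally have "(a-1) * real (Suc n) powr (-a) \<le> real n powr (1-a) - real (Suc n) powr (1-a)" .
  hence "real (Suc n) powr (-a) \<le> (real n powr (1-a) - real (Suc n) powr (1-a)) / (a-1)"
    using assms by (simp add: field_simps)
  moreover have "(\<Sum>k=2..Suc n. real k powr (-a)) = (\<Sum>k=2..n. real k powr (-a)) + real (Suc n) powr (-a)"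
    using step by simp
  ultimately show ?case using step.IH by (simp add: diff_divide_distrib)
qed

lemma E_bound:
  fixes a B :: real and P :: "nat pmf"
  assumes "0<a" "1 \<le> z" "in_L a g f z P" "\<forall>k. f k \<le> B" "0 \<le> B"
  shows "measure_pmf.expectation P real \<le> 1 + B * a * (\<Sum>k=2..z. real k powr (-a))"
proof -
  have L: "set_pmf P \<subseteq> {0, 1} \<union> {2..z}"
      "\<forall>k\<in>{2..z}. pmf P k \<le> f k * (real k powr (-a) - (1 + real k) powr (-a))"
    using assms(3) unfolding in_L_def by auto
  have "measure_pmf.expectation P real = (\<Sum>k\<in>{..z}. pmf P k *\<^sub>R real k)"
    using L(1) assms(2) by (intro integral_measure_pmf) auto
  also have "{..z} = {..1} \<union> {2..z}" using assms(2) by auto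
  also have "(\<Sum>k\<in>{..1} \<union> {2..z}. pmf P k *\<^sub>R real k)
      = (\<Sum>k\<in>{..1}. pmf P k * real k) + (\<Sum>k\<in>{2..z}. pmf P k * real k)"
    by (subst sum.union_disjoint) auto
  also have "(\<Sum>k\<in>{..1}. pmf P k * real k) = pmf P 1"
    by (simp add: atMost_Suc)
  also have "(\<Sum>k\<in>{2..z}. pmf P k * real k) \<le> (\<Sum>k\<in>{2..z}. B * a * real k powr (-a))"
  proof (rule sum_mono)
    fix k assume k: "k \<in> {2..z}"
    have d0: "0 \<le> real k powr (-a) - (1 + real k) powr (-a)"
      using powr_mono2'[of "-a" "real k" "1 + real k"] assms k by auto
    have "pmf P k * real k \<le> f k * (real k powr (-a) - (1 + real k) powr (-a)) * real k"
      using L(2) k by (intro mult_right_mono) auto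
    also have "\<dots> \<le> B * (real k powr (-a) - (1 + real k) powr (-a)) * real k"
      using assms(4) d0 by (intro mult_right_mono) auto
    also have "\<dots> = B * (real k * (real k powr (-a) - (real k + 1) powr (-a)))"
      by (simp add: algebra_simps)
    also have "\<dots> \<le> B * (a * real k powr (-a))"
      using diff_bound[of a "real k"] assms k by (intro mult_left_mono) auto
    finally show "pmf P k * real k \<le> B * a * real k powr (-a)" by (simp add: mult.assoc)
  qed
  finally show ?thesis using pmf_le_1[of P 1] by (simp add: sum_distrib_left)
qed

theorem lemma5:
  fixes \<alpha> \<kappa> :: real and \<zeta> :: "nat \<Rightarrow> nat" and \<epsilon> :: "nat \<Rightarrow> real"
    and g\<^sub>\<alpha> f\<^sub>\<alpha> g\<^sub>\<kappa> f\<^sub>\<kappa> :: "nat \<Rightarrow> real"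
    and A K X :: "nat \<Rightarrow> nat pmf"
  assumes "0 < \<alpha>" "\<alpha> < 2" "2 \<le> \<kappa>"
    and "\<forall>N. 0 < \<zeta> N"
    and "\<forall>N. 0 < \<epsilon> N \<and> \<epsilon> N < 1"
    and "admissible_env g\<^sub>\<alpha> f\<^sub>\<alpha>" "admissible_env g\<^sub>\<kappa> f\<^sub>\<kappa>"
    and "\<forall>N. in_L \<alpha> g\<^sub>\<alpha> f\<^sub>\<alpha> (\<zeta> N) (A N)"
    and "\<forall>N. in_L \<kappa> g\<^sub>\<kappa> f\<^sub>\<kappa> (\<zeta> N) (K N)"
    and "\<forall>N. X N = bind_pmf (bernoulli_pmf (\<epsilon> N)) (\<lambda>b. if b then A N else K N)"
    and "\<alpha> < 1 \<Longrightarrow> \<epsilon> \<in> O(\<lambda>N. real (\<zeta> N) powr (\<alpha> - 1))"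
    and "\<alpha> = 1 \<Longrightarrow> \<epsilon> \<in> O(\<lambda>N. 1 / ln (real (\<zeta> N)))"
    and "\<alpha> > 1 \<Longrightarrow> \<epsilon> \<in> O(\<lambda>N. 1)"
  shows "limsup (\<lambda>N. ereal (measure_pmf.expectation (X N) real)) < \<infinity>"
proof -
  note a = assms
  have envA: "\<exists>B\<ge>0. \<forall>k. f\<^sub>\<alpha> k \<le> B" and envK: "\<exists>B\<ge>0. \<forall>k. f\<^sub>\<kappa> k \<le> B"
    using a(6,7) unfolding admissible_env_def bounded_iff
    by (metis abs_le_D1 norm_ge_zero order_trans rangeI real_norm_def)+
  obtain BA where BA: "BA \<ge> 0" "\<forall>k. f\<^sub>\<alpha> k \<le> BA" using envA by blast
  obtain BK where BK: "BK \<ge> 0" "\<forall>k. f\<^sub>\<kappa> k \<le> BK" using envK by blast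
  define T where "T N = (\<Sum>k=2..\<zeta> N. real k powr (-\<alpha>))" for N
  have z1: "1 \<le> \<zeta> N" for N using a(4) by (simp add: Suc_le_eq)
  have T0: "0 \<le> T N" for N unfolding T_def by (intro sum_nonneg) auto
  have EX: "measure_pmf.expectation (X N) real
      = \<epsilon> N * measure_pmf.expectation (A N) real + (1 - \<epsilon> N) * measure_pmf.expectation (K N) real" for N
  proof -
    have e: "0 \<le> \<epsilon> N" "\<epsilon> N \<le> 1" using a(5) by (auto simp: less_imp_le)
    have sA: "set_pmf (A N) \<subseteq> {..\<zeta> N}" and sK: "set_pmf (K N) \<subseteq> {..\<zeta> N}"
      using a(8,9) z1[of N] unfolding in_L_def by (auto dest!: spec[of _ N])
    have pX: "pmf (X N) k = \<epsilon> N * pmf (A N) k + (1 - \<epsilon> N) * pmf (K N) k" for k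
      using a(10) e by (simp add: pmf_bind algebra_simps)
    have sX: "set_pmf (X N) \<subseteq> {..\<zeta> N}"
    proof
      fix k assume "k \<in> set_pmf (X N)"
      hence "pmf (X N) k \<noteq> 0" by (simp add: set_pmf_iff)
      hence "pmf (A N) k \<noteq> 0 \<or> pmf (K N) k \<noteq> 0" using pX by auto
      thus "k \<in> {..\<zeta> N}" using sA sK by (auto simp: set_pmf_iff)
    qed
    have "measure_pmf.expectation (X N) real = (\<Sum>k\<in>{..\<zeta> N}. pmf (X N) k *\<^sub>R real k)"
      using sX by (intro integral_measure_pmf) auto
    also have "\<dots> = \<epsilon> N * (\<Sum>k\<in>{..\<zeta> N}. pmf (A N) k *\<^sub>R real k)
        + (1 - \<epsilon> N) * (\<Sum>k\<in>{..\<zeta> N}. pmf (K N) k *\<^sub>R real k)"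
      unfolding sum_distrib_left sum.distrib[symmetric] by (rule sum.cong) (simp_all add: pX algebra_simps)
    also have "(\<Sum>k\<in>{..\<zeta> N}. pmf (A N) k *\<^sub>R real k) = measure_pmf.expectation (A N) real"
      using sA by (intro integral_measure_pmf[symmetric]) auto
    also have "(\<Sum>k\<in>{..\<zeta> N}. pmf (K N) k *\<^sub>R real k) = measure_pmf.expectation (K N) real"
      using sK by (intro integral_measure_pmf[symmetric]) auto
    finally show ?thesis .
  qed
  define MK where "MK = 1 + BK * \<kappa> * (1 / (\<kappa> - 1))"
  have EK: "measure_pmf.expectation (K N) real \<le> MK" for N
  proof -
    have "measure_pmf.expectation (K N) real \<le> 1 + BK * \<kappa> * (\<Sum>k=2..\<zeta> N. real k powr (-\<kappa>))"
      using E_bound[of \<kappa> "\<zeta> N" g\<^sub>\<kappa> f\<^sub>\<kappa> "K N" BK] a(3,9) z1 BK by auto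
    also have "(\<Sum>k=2..\<zeta> N. real k powr (-\<kappa>)) \<le> 1 / (\<kappa> - 1)"
    proof -
      have "(\<Sum>k=2..\<zeta> N. real k powr (-\<kappa>)) \<le> (1 - real (\<zeta> N) powr (1-\<kappa>)) / (\<kappa>-1)"
        using T_gt1[of \<kappa> "\<zeta> N"] a(3) z1 by auto
      also have "\<dots> \<le> 1 / (\<kappa>-1)" using a(3) by (intro divide_right_mono) auto
      finally show ?thesis .
    qed
    hence "1 + BK * \<kappa> * (\<Sum>k=2..\<zeta> N. real k powr (-\<kappa>)) \<le> MK"
      unfolding MK_def using BK a(3) by (intro add_left_mono mult_left_mono) auto
    finally show ?thesis .
  qed
  have EA: "measure_pmf.expectation (A N) real \<le> 1 + BA * \<alpha> * T N" for N
    unfolding T_def using E_bound[of \<alpha> "\<zeta> N" g\<^sub>\<alpha> f\<^sub>\<alpha> "A N" BA] a(1,8) z1 BA by auto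
  have "\<exists>C. eventually (\<lambda>N. \<epsilon> N * T N \<le> C) sequentially"
  proof (cases "\<alpha> < 1")
    case True
    then obtain c where c: "c > 0" "eventually (\<lambda>N. norm (\<epsilon> N) \<le> c * norm (real (\<zeta> N) powr (\<alpha> - 1))) sequentially"
      using a(11)[OF True] by (elim landau_o.bigE) auto
    have "eventually (\<lambda>N. \<epsilon> N * T N \<le> c / (1-\<alpha>)) sequentially"
      using c(2)
    proof eventually_elim
      case (elim N)
      have "\<epsilon> N \<le> c * real (\<zeta> N) powr (\<alpha> - 1)" using elim by simp
      moreover have "T N \<le> real (\<zeta> N) powr (1-\<alpha>) / (1-\<alpha>)"
        unfolding T_def using T_lt1[of \<alpha> "\<zeta> N"] a(1) True z1 by auto
      ultimately have "\<epsilon> N * T N \<le> (c * real (\<zeta> N) powr (\<alpha> - 1)) * (real (\<zeta> N) powr (1-\<alpha>) / (1-\<alpha>))"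
        using T0 a(5) c(1) by (intro mult_mono) (auto simp: less_imp_le)
      also have "\<dots> = c * (real (\<zeta> N) powr (\<alpha> - 1) * real (\<zeta> N) powr (1-\<alpha>)) / (1-\<alpha>)" by simp
      also have "real (\<zeta> N) powr (\<alpha> - 1) * real (\<zeta> N) powr (1-\<alpha>) = 1"
        using a(4) by (simp add: powr_add[symmetric])
      finally show ?case by simp
    qed
    thus ?thesis by blast
  next
    case False
    show ?thesis
    proof (cases "\<alpha> = 1")
      case True
      then obtain c where c: "c > 0" "eventually (\<lambda>N. norm (\<epsilon> N) \<le> c * norm (1 / ln (real (\<zeta> N)))) sequentially"
        using a(12)[OF True] by (elim landau_o.bigE) auto
      have "eventually (\<lambda>N. \<epsilon> N * T N \<le> c) sequentially"
        using c(2)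
      proof eventually_elim
        case (elim N)
        show ?case
        proof (cases "\<zeta> N = 1")
          case True
          then show ?thesis unfolding T_def using c by simp
        next
          case False
          hence z2: "2 \<le> \<zeta> N" using z1[of N] by simp
          hence lnp: "ln (real (\<zeta> N)) > 0" by simp
          have "\<epsilon> N \<le> c / ln (real (\<zeta> N))" using elim lnp by simp
          moreover have "T N \<le> ln (real (\<zeta> N))"
            unfolding T_def using T_eq1[of "\<zeta> N"] \<open>\<alpha> = 1\<close> z1 by auto
          ultimately have "\<epsilon> N * T N \<le> (c / ln (real (\<zeta> N))) * ln (real (\<zeta> N))"
            using T0 a(5) c(1) lnp by (intro mult_mono) (auto simp: less_imp_le)
          also have "\<dots> = c" using lnp by simp
          finally show ?thesis .
        qed
      qed
      thus ?thesis by blast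
    next
      case False
      hence a1: "1 < \<alpha>" using \<open>\<not> \<alpha> < 1\<close> by simp
      show ?thesis
      proof (intro exI[of _ "1 / (\<alpha>-1)"] always_eventually allI)
        fix N
        have "T N \<le> (1 - real (\<zeta> N) powr (1-\<alpha>)) / (\<alpha>-1)"
          unfolding T_def using T_gt1[of \<alpha> "\<zeta> N"] a1 z1 by auto
        also have "\<dots> \<le> 1 / (\<alpha>-1)" using a1 by (intro divide_right_mono) auto
        finally have "T N \<le> 1 / (\<alpha>-1)" .
        moreover have "\<epsilon> N * T N \<le> T N" using a(5) T0 by (simp add: mult_left_le_one_le less_imp_le)
        ultimately show "\<epsilon> N * T N \<le> 1 / (\<alpha>-1)" by simp
      qed
    qed
  qed
  then obtain C where C: "eventually (\<lambda>N. \<epsilon> N * T N \<le> C) sequentially" by blast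
  have "eventually (\<lambda>N. ereal (measure_pmf.expectation (X N) real) \<le> ereal (1 + BA * \<alpha> * C + MK)) sequentially"
    using C
  proof eventually_elim
    case (elim N)
    have e: "0 \<le> \<epsilon> N" "\<epsilon> N \<le> 1" using a(5) by (auto simp: less_imp_le)
    have "\<epsilon> N * measure_pmf.expectation (A N) real \<le> \<epsilon> N * (1 + BA * \<alpha> * T N)"
      using EA e by (intro mult_left_mono) auto
    also have "\<dots> = \<epsilon> N + BA * \<alpha> * (\<epsilon> N * T N)" by (simp add: algebra_simps)
    also have "\<dots> \<le> 1 + BA * \<alpha> * C"
      using e elim BA a(1) by (intro add_mono mult_left_mono) auto
    finally have 1: "\<epsilon> N * measure_pmf.expectation (A N) real \<le> 1 + BA * \<alpha> * C" .
    have "(1 - \<epsilon> N) * measure_pmf.expectation (K N) real \<le> 1 * measure_pmf.expectation (K N) real"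
      using e by (intro mult_right_mono) (auto intro!: integral_nonneg_AE)
    also have "\<dots> \<le> MK" using EK by simp
    finally show ?case using 1 EX[of N] by simp
  qed
  hence "limsup (\<lambda>N. ereal (measure_pmf.expectation (X N) real)) \<le> ereal (1 + BA * \<alpha> * C + MK)"
    by (rule Limsup_bounded)
  also have "\<dots> < \<infinity>" by simp
  finally show ?thesis .
qed

end
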